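(* There exist a total pca and a nontotal pca which are isomorphic.
   Context: A partial combinatory algebra (pca) is a set $A$ with a partial binary application admitting $K,S\in A$ with $Kab=a$, $Sab{\downarrow}$, $Sabc\simeq ac(bc)$; it is total if application is everywhere defined. An applicative morphism $\gamma:A\to B$ is a function from $A$ to nonempty subsets of $B$ with some $r\in B$ such that $aa'{\downarrow}$, $b\in\gamma(a)$, $b'\in\gamma(a')$ imply $rbb'{\downarrow}$ and $rbb'\in\gamma(aa')$; composition is $(\delta\gamma)(a)=\bigcup_{b\in\gamma(a)}\delta(b)$, identities are $a\mapsto\{a\}$. Pcas $A,B$ are isomorphic if there are applicative morphisms $\gamma:A\to B$, $\delta:B\to A$ with $\delta\gamma$ and $\gamma\delta$ equal to the identity morphisms. *)

theory Defs
  imports Main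
begin

definition papp :: "('a \<Rightarrow> 'a \<Rightarrow> 'a option) \<Rightarrow> 'a option \<Rightarrow> 'a option \<Rightarrow> 'a option" where
  "papp app x y = (case x of None \<Rightarrow> None | Some a \<Rightarrow> (case y of None \<Rightarrow> None | Some b \<Rightarrow> app a b))"

definition is_pca :: "'a set \<Rightarrow> ('a \<Rightarrow> 'a \<Rightarrow> 'a option) \<Rightarrow> bool" where
  "is_pca A app \<longleftrightarrow>
     (\<forall>a\<in>A. \<forall>b\<in>A. \<forall>c. app a b = Some c \<longrightarrow> c \<in> A) \<and>
     (\<exists>K\<in>A. \<exists>S\<in>A.
        (\<forall>a\<in>A. \<forall>b\<in>A. papp app (papp app (Some K) (Some a)) (Some b) = Some a) \<and>
        (\<forall>a\<in>A. \<forall>b\<in>A. papp app (papp app (Some S) (Some a)) (Some b) \<noteq> None) \<and>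
        (\<forall>a\<in>A. \<forall>b\<in>A. \<forall>c\<in>A.
           papp app (papp app (papp app (Some S) (Some a)) (Some b)) (Some c) =
           papp app (papp app (Some a) (Some c)) (papp app (Some b) (Some c))))"

definition is_total :: "'a set \<Rightarrow> ('a \<Rightarrow> 'a \<Rightarrow> 'a option) \<Rightarrow> bool" where
  "is_total A app \<longleftrightarrow> (\<forall>a\<in>A. \<forall>b\<in>A. app a b \<noteq> None)"

definition applicative_morphism ::
  "'a set \<Rightarrow> ('a \<Rightarrow> 'a \<Rightarrow> 'a option) \<Rightarrow> 'b set \<Rightarrow> ('b \<Rightarrow> 'b \<Rightarrow> 'b option) \<Rightarrow> ('a \<Rightarrow> 'b set) \<Rightarrow> bool" where
  "applicative_morphism A appA B appB \<gamma> \<longleftrightarrow>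
     (\<forall>a\<in>A. \<gamma> a \<noteq> {} \<and> \<gamma> a \<subseteq> B) \<and>
     (\<exists>r\<in>B. \<forall>a\<in>A. \<forall>a'\<in>A. \<forall>c. appA a a' = Some c \<longrightarrow>
        (\<forall>b\<in>\<gamma> a. \<forall>b'\<in>\<gamma> a'. \<exists>d. papp appB (papp appB (Some r) (Some b)) (Some b') = Some d \<and> d \<in> \<gamma> c))"

definition comp_am :: "('b \<Rightarrow> 'c set) \<Rightarrow> ('a \<Rightarrow> 'b set) \<Rightarrow> 'a \<Rightarrow> 'c set" where
  "comp_am \<delta> \<gamma> a = (\<Union>b\<in>\<gamma> a. \<delta> b)"

definition pca_isomorphic ::
  "'a set \<Rightarrow> ('a \<Rightarrow> 'a \<Rightarrow> 'a option) \<Rightarrow> 'b set \<Rightarrow> ('b \<Rightarrow> 'b \<Rightarrow> 'b option) \<Rightarrow> bool" where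
  "pca_isomorphic A appA B appB \<longleftrightarrow>
     (\<exists>\<gamma> \<delta>. applicative_morphism A appA B appB \<gamma> \<and> applicative_morphism B appB A appA \<delta> \<and>
        (\<forall>a\<in>A. comp_am \<delta> \<gamma> a = {a}) \<and> (\<forall>b\<in>B. comp_am \<gamma> \<delta> b = {b}))"

end

theory Submission imports Defs "HOL-Library.Countable_Set" begin

datatype u = M | Arr "u list" u

definition ap :: "u set \<Rightarrow> u set \<Rightarrow> u set" where
  "ap X Y = {x. \<exists>\<beta>. Arr \<beta> x \<in> X \<and> set \<beta> \<subseteq> Y \<and> M \<notin> set \<beta>}"

lemma ap_mono: "X \<subseteq> X' \<Longrightarrow> Y \<subseteq> Y' \<Longrightarrow> ap X Y \<subseteq> ap X' Y'"
  unfolding ap_def by blast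

lemma ap_insM1[simp]: "ap (insert M X) Y = ap X Y"
  unfolding ap_def by auto

lemma ap_insM2[simp]: "ap X (insert M Y) = ap X Y"
  unfolding ap_def by auto

lemma ap_insArr0[simp]: "ap (insert (Arr [] y) X) Y = insert y (ap X Y)"
  unfolding ap_def by auto

lemma ap_Un: "ap (X \<union> X') Y = ap X Y \<union> ap X' Y"
  unfolding ap_def by auto

lemma ap_compact:
  "finite D \<Longrightarrow> D \<subseteq> ap X Y \<Longrightarrow> \<exists>X0 Y0. finite X0 \<and> finite Y0 \<and> X0 \<subseteq> X - {M} \<and> Y0 \<subseteq> Y - {M} \<and> D \<subseteq> ap X0 Y0"
proof (induction D rule: finite_induct)
  case empty
  then show ?case by blast
next
  case (insert x F)
  then obtain X0 Y0 where h: "finite X0" "finite Y0" "X0 \<subseteq> X - {M}" "Y0 \<subseteq> Y - {M}" "F \<subseteq> ap X0 Y0"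
    by blast
  from insert.prems obtain \<beta> where b: "Arr \<beta> x \<in> X" "set \<beta> \<subseteq> Y" "M \<notin> set \<beta>"
    unfolding ap_def by blast
  let ?X1 = "insert (Arr \<beta> x) X0" and ?Y1 = "set \<beta> \<union> Y0"
  have "F \<subseteq> ap ?X1 ?Y1" using h(5) ap_mono[of X0 ?X1 Y0 ?Y1] by blast
  moreover have "x \<in> ap ?X1 ?Y1" unfolding ap_def using b by blast
  ultimately show ?case using h b by (intro exI[of _ ?X1] exI[of _ ?Y1]) auto
qed

definition code3 :: "(u set \<Rightarrow> u set \<Rightarrow> u set \<Rightarrow> u set) \<Rightarrow> u set" where
  "code3 F = {Arr as (Arr bs (Arr cs x)) | as bs cs x. M \<notin> set as \<and> M \<notin> set bs \<and> M \<notin> set cs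
     \<and> x \<in> F (set as) (set bs) (set cs)}"

lemma ap3_code3: "ap (ap (ap (code3 F) X) Y) Z = {x. \<exists>as bs cs. set as \<subseteq> X \<and> set bs \<subseteq> Y \<and> set cs \<subseteq> Z
   \<and> M \<notin> set as \<and> M \<notin> set bs \<and> M \<notin> set cs \<and> x \<in> F (set as) (set bs) (set cs)}"
  unfolding ap_def code3_def by blast

lemma code3_eq:
  assumes mono: "\<And>X X' Y Y' Z Z'. X \<subseteq> X' \<Longrightarrow> Y \<subseteq> Y' \<Longrightarrow> Z \<subseteq> Z' \<Longrightarrow> F X Y Z \<subseteq> F X' Y' Z'"
    and comp: "\<And>x X Y Z. x \<in> F X Y Z \<Longrightarrow> \<exists>X0 Y0 Z0. finite X0 \<and> finite Y0 \<and> finite Z0 \<and>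
        X0 \<subseteq> X - {M} \<and> Y0 \<subseteq> Y - {M} \<and> Z0 \<subseteq> Z - {M} \<and> x \<in> F X0 Y0 Z0"
  shows "ap (ap (ap (code3 F) X) Y) Z = F X Y Z"
proof
  show "ap (ap (ap (code3 F) X) Y) Z \<subseteq> F X Y Z"
    unfolding ap3_code3 using mono by blast
next
  show "F X Y Z \<subseteq> ap (ap (ap (code3 F) X) Y) Z"
  proof
    fix x assume "x \<in> F X Y Z"
    then obtain X0 Y0 Z0 where h: "finite X0" "finite Y0" "finite Z0"
        "X0 \<subseteq> X - {M}" "Y0 \<subseteq> Y - {M}" "Z0 \<subseteq> Z - {M}" "x \<in> F X0 Y0 Z0"
      using comp[OF \<open>x \<in> F X Y Z\<close>] by (elim exE conjE) simp
    obtain as where as: "set as = X0" using h(1) finite_list by blast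
    obtain bs where bs: "set bs = Y0" using h(2) finite_list by blast
    obtain cs where cs: "set cs = Z0" using h(3) finite_list by blast
    show "x \<in> ap (ap (ap (code3 F) X) Y) Z"
      unfolding ap3_code3 using as bs cs h by blast
  qed
qed

definition FA :: "u set \<Rightarrow> u set \<Rightarrow> u set \<Rightarrow> u set" where
  "FA X Y Z = ap (ap X Z) (ap Y Z)"

lemma FA_mono: "X \<subseteq> X' \<Longrightarrow> Y \<subseteq> Y' \<Longrightarrow> Z \<subseteq> Z' \<Longrightarrow> FA X Y Z \<subseteq> FA X' Y' Z'"
  unfolding FA_def by (intro ap_mono) (auto intro: ap_mono)

lemma FA_comp: "x \<in> FA X Y Z \<Longrightarrow> \<exists>X0 Y0 Z0. finite X0 \<and> finite Y0 \<and> finite Z0 \<and>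
        X0 \<subseteq> X - {M} \<and> Y0 \<subseteq> Y - {M} \<and> Z0 \<subseteq> Z - {M} \<and> x \<in> FA X0 Y0 Z0"
proof -
  assume "x \<in> FA X Y Z"
  then obtain P Q where pq: "finite P" "finite Q" "P \<subseteq> ap X Z - {M}" "Q \<subseteq> ap Y Z - {M}" "x \<in> ap P Q"
    using ap_compact[of "{x}" "ap X Z" "ap Y Z"] unfolding FA_def by auto
  obtain X0 Z1 where a: "finite X0" "finite Z1" "X0 \<subseteq> X - {M}" "Z1 \<subseteq> Z - {M}" "P \<subseteq> ap X0 Z1"
    using ap_compact[of P X Z] pq(1,3) by blast
  obtain Y0 Z2 where b: "finite Y0" "finite Z2" "Y0 \<subseteq> Y - {M}" "Z2 \<subseteq> Z - {M}" "Q \<subseteq> ap Y0 Z2"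
    using ap_compact[of Q Y Z] pq(2,4) by blast
  have "P \<subseteq> ap X0 (Z1 \<union> Z2)" using a(5) ap_mono[of X0 X0 Z1 "Z1 \<union> Z2"] by blast
  moreover have "Q \<subseteq> ap Y0 (Z1 \<union> Z2)" using b(5) ap_mono[of Y0 Y0 Z2 "Z1 \<union> Z2"] by blast
  ultimately have "x \<in> FA X0 Y0 (Z1 \<union> Z2)" unfolding FA_def using pq(5) ap_mono by blast
  moreover have "Z1 \<union> Z2 \<subseteq> Z - {M}" using a(4) b(4) by (intro Un_least)
  moreover have "finite (Z1 \<union> Z2)" using a(2) b(2) by simp
  ultimately have "finite X0 \<and> finite Y0 \<and> finite (Z1 \<union> Z2) \<and> X0 \<subseteq> X - {M} \<and> Y0 \<subseteq> Y - {M} \<and>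
      Z1 \<union> Z2 \<subseteq> Z - {M} \<and> x \<in> FA X0 Y0 (Z1 \<union> Z2)" using a(1,3) b(1,3) by (intro conjI)
  note H = this
  show ?thesis
    apply (rule exI[where x="X0"])
    apply (rule exI[where x="Y0"])
    apply (rule exI[where x="Z1 \<union> Z2"])
    by (rule H)
qed

definition FB :: "u set \<Rightarrow> u set \<Rightarrow> u set \<Rightarrow> u set" where
  "FB X Y Z = (if M \<in> ap X Z \<and> M \<in> ap Y Z \<and> M \<in> FA X Y Z then FA X Y Z else {})"

lemma FB_mono: "X \<subseteq> X' \<Longrightarrow> Y \<subseteq> Y' \<Longrightarrow> Z \<subseteq> Z' \<Longrightarrow> FB X Y Z \<subseteq> FB X' Y' Z'"
  unfolding FB_def using FA_mono[of X X' Y Y' Z Z'] ap_mono[of X X' Z Z'] ap_mono[of Y Y' Z Z'] by auto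

lemma FB_comp: "x \<in> FB X Y Z \<Longrightarrow> \<exists>X0 Y0 Z0. finite X0 \<and> finite Y0 \<and> finite Z0 \<and>
        X0 \<subseteq> X - {M} \<and> Y0 \<subseteq> Y - {M} \<and> Z0 \<subseteq> Z - {M} \<and> x \<in> FB X0 Y0 Z0"
proof -
  assume x: "x \<in> FB X Y Z"
  then have c: "M \<in> ap X Z" "M \<in> ap Y Z" "M \<in> FA X Y Z" "x \<in> FA X Y Z"
    unfolding FB_def by (auto split: if_splits)
  obtain X1 Y1 Z1 where w1: "finite X1" "finite Y1" "finite Z1" "X1 \<subseteq> X - {M}" "Y1 \<subseteq> Y - {M}" "Z1 \<subseteq> Z - {M}" "x \<in> FA X1 Y1 Z1"
    using FA_comp[OF c(4)] by blast
  obtain X2 Y2 Z2 where w2: "finite X2" "finite Y2" "finite Z2" "X2 \<subseteq> X - {M}" "Y2 \<subseteq> Y - {M}" "Z2 \<subseteq> Z - {M}" "M \<in> FA X2 Y2 Z2"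
    using FA_comp[OF c(3)] by blast
  obtain X3 Z3 where w3: "finite X3" "finite Z3" "X3 \<subseteq> X - {M}" "Z3 \<subseteq> Z - {M}" "{M} \<subseteq> ap X3 Z3"
    using ap_compact[of "{M}" X Z] c(1) by auto
  obtain Y4 Z4 where w4: "finite Y4" "finite Z4" "Y4 \<subseteq> Y - {M}" "Z4 \<subseteq> Z - {M}" "{M} \<subseteq> ap Y4 Z4"
    using ap_compact[of "{M}" Y Z] c(2) by auto
  let ?X = "X1 \<union> X2 \<union> X3" and ?Y = "Y1 \<union> Y2 \<union> Y4" and ?Z = "Z1 \<union> Z2 \<union> Z3 \<union> Z4"
  have "x \<in> FA ?X ?Y ?Z" using w1(7) FA_mono[of X1 ?X Y1 ?Y Z1 ?Z] by blast
  moreover have "M \<in> FA ?X ?Y ?Z" using w2(7) FA_mono[of X2 ?X Y2 ?Y Z2 ?Z] by blast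
  moreover have "M \<in> ap ?X ?Z" using w3(5) ap_mono[of X3 ?X Z3 ?Z] by blast
  moreover have "M \<in> ap ?Y ?Z" using w4(5) ap_mono[of Y4 ?Y Z4 ?Z] by blast
  ultimately have "x \<in> FB ?X ?Y ?Z" unfolding FB_def by simp
  moreover have "finite ?X" "finite ?Y" "finite ?Z" using w1 w2 w3 w4 by simp_all
  moreover have "?X \<subseteq> X - {M}" using w1(4) w2(4) w3(3) by (intro Un_least)
  moreover have "?Y \<subseteq> Y - {M}" using w1(5) w2(5) w4(3) by (intro Un_least)
  moreover have "?Z \<subseteq> Z - {M}" using w1(6) w2(6) w3(4) w4(4) by (intro Un_least)
  ultimately have "finite ?X \<and> finite ?Y \<and> finite ?Z \<and> ?X \<subseteq> X - {M} \<and> ?Y \<subseteq> Y - {M} \<and>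
      ?Z \<subseteq> Z - {M} \<and> x \<in> FB ?X ?Y ?Z" by (intro conjI)
  note H = this
  show ?thesis
    apply (rule exI[where x="?X"])
    apply (rule exI[where x="?Y"])
    apply (rule exI[where x="?Z"])
    by (rule H)
qed

lemma FA_code: "ap (ap (ap (code3 FA) X) Y) Z = FA X Y Z"
  by (rule code3_eq[OF FA_mono FA_comp])

lemma FB_code: "ap (ap (ap (code3 FB) X) Y) Z = FB X Y Z"
  by (rule code3_eq[OF FB_mono FB_comp])

definition K0 :: "u set" where "K0 = {Arr [a] (Arr [] a) | a. a \<noteq> M}"
definition I0 :: "u set" where "I0 = {Arr [Arr \<beta> x] (Arr \<beta> x) | \<beta> x. M \<notin> set \<beta>}"

definition "KA = insert M K0"
definition "KB = insert M (insert (Arr [] M) (insert (Arr [] (Arr [] M)) K0))"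
definition "SA = insert M (code3 FA)"
definition "SB = insert M (insert (Arr [] M) (insert (Arr [] (Arr [] M)) (code3 FB)))"
definition "RR = insert M (insert (Arr [] M) (insert (Arr [] (Arr [] M)) I0))"
definition "SS = insert M I0"

lemma ap_K0: "ap (ap K0 X) Y = X - {M}"
  unfolding ap_def K0_def by auto

lemma ap_I0: "ap (ap I0 X) Y = ap X Y"
  unfolding ap_def I0_def by auto

lemma M_ap_I0: "M \<notin> ap I0 X"
  unfolding ap_def I0_def by auto

datatype tr = G nat | Ap tr tr

instance tr :: countable by countable_datatype

definition gen :: "nat \<Rightarrow> u set" where
  "gen n = (if n = 0 then KA else if n = 1 then SA else if n = 2 then KB else if n = 3 then SB
     else if n = 4 then RR else SS)"

fun ev :: "tr \<Rightarrow> u set" where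
  "ev (G n) = gen n"
| "ev (Ap a b) = insert M (ap (ev a) (ev b))"

definition "CC = range ev"

lemma M_ev: "M \<in> ev t"
  by (induction t) (auto simp: gen_def KA_def SA_def KB_def SB_def RR_def SS_def)

lemma M_CC: "X \<in> CC \<Longrightarrow> M \<in> X"
  unfolding CC_def using M_ev by auto

lemma CC_closed: "X \<in> CC \<Longrightarrow> Y \<in> CC \<Longrightarrow> insert M (ap X Y) \<in> CC"
proof -
  assume "X \<in> CC" "Y \<in> CC"
  then obtain s t where "X = ev s" "Y = ev t" unfolding CC_def by auto
  then have "insert M (ap X Y) = ev (Ap s t)" by simp
  then show ?thesis unfolding CC_def by (metis rangeI)
qed

lemma gens_CC: "KA \<in> CC" "SA \<in> CC" "KB \<in> CC" "SB \<in> CC" "RR \<in> CC" "SS \<in> CC"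
  unfolding CC_def
  by (rule range_eqI[where x = "G 0"], simp add: gen_def)
     (rule range_eqI[where x = "G 1"], simp add: gen_def,
      rule range_eqI[where x = "G 2"], simp add: gen_def,
      rule range_eqI[where x = "G 3"], simp add: gen_def,
      rule range_eqI[where x = "G 4"], simp add: gen_def,
      rule range_eqI[where x = "G 5"], simp add: gen_def)+

lemma countable_CC: "countable CC"
  unfolding CC_def by simp

definition appA :: "u set \<Rightarrow> u set \<Rightarrow> u set option" where
  "appA X Y = Some (insert M (ap X Y))"
definition appB :: "u set \<Rightarrow> u set \<Rightarrow> u set option" where
  "appB X Y = (if M \<in> ap X Y then Some (ap X Y) else None)"

lemma papp_Some[simp]: "papp app (Some a) (Some b) = app a b"
  by (simp add: papp_def)
lemma papp_None[simp]: "papp app None y = None" "papp app x None = None"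
  by (simp_all add: papp_def split: option.splits)

lemma A_closed: "\<forall>a\<in>CC. \<forall>b\<in>CC. \<forall>c. appA a b = Some c \<longrightarrow> c \<in> CC"
  using CC_closed by (auto simp: appA_def)
lemma A_K: "\<forall>a\<in>CC. \<forall>b\<in>CC. papp appA (papp appA (Some KA) (Some a)) (Some b) = Some a"
  using M_CC by (auto simp: appA_def KA_def ap_K0 insert_absorb)
lemma A_Sd: "\<forall>a\<in>CC. \<forall>b\<in>CC. papp appA (papp appA (Some SA) (Some a)) (Some b) \<noteq> None"
  by (simp add: appA_def)
lemma A_S: "\<forall>a\<in>CC. \<forall>b\<in>CC. \<forall>c\<in>CC.
    papp appA (papp appA (papp appA (Some SA) (Some a)) (Some b)) (Some c) =
    papp appA (papp appA (Some a) (Some c)) (papp appA (Some b) (Some c))"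
  by (simp add: appA_def SA_def FA_code FA_def)

lemma pcaA: "is_pca CC appA"
  unfolding is_pca_def
  apply (rule conjI, rule A_closed)
  apply (rule bexI[of _ KA], rule bexI[of _ SA])
  using A_K A_Sd A_S gens_CC by auto

lemma totalA: "is_total CC appA"
  by (simp add: is_total_def appA_def)

lemma B_closed: "\<forall>a\<in>CC. \<forall>b\<in>CC. \<forall>c. appB a b = Some c \<longrightarrow> c \<in> CC"
  using CC_closed by (auto simp: appB_def split: if_splits) (metis insert_absorb)
lemma B_K: "\<forall>a\<in>CC. \<forall>b\<in>CC. papp appB (papp appB (Some KB) (Some a)) (Some b) = Some a"
  using M_CC by (auto simp: appB_def KB_def ap_K0 insert_absorb)
lemma B_Sd: "\<forall>a\<in>CC. \<forall>b\<in>CC. papp appB (papp appB (Some SB) (Some a)) (Some b) \<noteq> None"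
  by (simp add: appB_def SB_def)
lemma B_S: "\<forall>a\<in>CC. \<forall>b\<in>CC. \<forall>c\<in>CC.
    papp appB (papp appB (papp appB (Some SB) (Some a)) (Some b)) (Some c) =
    papp appB (papp appB (Some a) (Some c)) (papp appB (Some b) (Some c))"
  by (simp add: appB_def SB_def FB_code FB_def FA_def)

lemma pcaB: "is_pca CC appB"
  unfolding is_pca_def
  apply (rule conjI, rule B_closed)
  apply (rule bexI[of _ KB], rule bexI[of _ SB])
  using B_K B_Sd B_S gens_CC by auto

lemma nontotalB: "\<not> is_total CC appB"
proof -
  have "M \<notin> ap SS SS" by (simp add: SS_def M_ap_I0)
  then have "appB SS SS = None" by (simp add: appB_def)
  then show ?thesis unfolding is_total_def using gens_CC(6) by blast
qed

lemma morAB: "applicative_morphism CC appA CC appB (\<lambda>x. {x})"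
  unfolding applicative_morphism_def
proof (intro conjI)
  show "\<forall>a\<in>CC. (\<lambda>x. {x}) a \<noteq> {} \<and> (\<lambda>x. {x}) a \<subseteq> CC" by auto
  show "\<exists>r\<in>CC. \<forall>a\<in>CC. \<forall>a'\<in>CC. \<forall>c. appA a a' = Some c \<longrightarrow>
        (\<forall>b\<in>{a}. \<forall>b'\<in>{a'}. \<exists>d. papp appB (papp appB (Some r) (Some b)) (Some b') = Some d \<and> d \<in> {c})"
    using gens_CC(5)
    by (intro bexI[of _ RR]) (auto simp: appA_def appB_def RR_def ap_I0)
qed

lemma morBA: "applicative_morphism CC appB CC appA (\<lambda>x. {x})"
  unfolding applicative_morphism_def
proof (intro conjI)
  show "\<forall>a\<in>CC. (\<lambda>x. {x}) a \<noteq> {} \<and> (\<lambda>x. {x}) a \<subseteq> CC" by auto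
  show "\<exists>r\<in>CC. \<forall>a\<in>CC. \<forall>a'\<in>CC. \<forall>c. appB a a' = Some c \<longrightarrow>
        (\<forall>b\<in>{a}. \<forall>b'\<in>{a'}. \<exists>d. papp appA (papp appA (Some r) (Some b)) (Some b') = Some d \<and> d \<in> {c})"
    using gens_CC(6)
    by (intro bexI[of _ SS]) (auto simp: appA_def appB_def SS_def ap_I0 insert_absorb split: if_splits)
qed

lemma isoAB: "pca_isomorphic CC appA CC appB"
  unfolding pca_isomorphic_def using morAB morBA by (auto simp: comp_am_def)


definition TR :: "('a \<Rightarrow> nat) \<Rightarrow> 'a set \<Rightarrow> ('a \<Rightarrow> 'a \<Rightarrow> 'a option) \<Rightarrow> nat \<Rightarrow> nat \<Rightarrow> nat option" where
  "TR e C app i j = map_option e (app (inv_into C e i) (inv_into C e j))"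

definition rel :: "('a \<Rightarrow> nat) \<Rightarrow> 'a set \<Rightarrow> 'a option \<Rightarrow> nat option \<Rightarrow> bool" where
  "rel e C ox oi \<longleftrightarrow> oi = map_option e ox \<and> (\<forall>x. ox = Some x \<longrightarrow> x \<in> C)"

lemma TR_e: "inj_on e C \<Longrightarrow> x \<in> C \<Longrightarrow> y \<in> C \<Longrightarrow> TR e C app (e x) (e y) = map_option e (app x y)"
  by (simp add: TR_def)

lemma rel_Some: "x \<in> C \<Longrightarrow> rel e C (Some x) (Some (e x))"
  by (simp add: rel_def)

lemma rel_papp:
  assumes inj: "inj_on e C" and cl: "\<forall>a\<in>C. \<forall>b\<in>C. \<forall>c. app a b = Some c \<longrightarrow> c \<in> C"
    and r1: "rel e C ox oi" and r2: "rel e C oy oj"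
  shows "rel e C (papp app ox oy) (papp (TR e C app) oi oj)"
proof (cases ox)
  case None
  then show ?thesis using r1 by (simp add: rel_def papp_def)
next
  case (Some x)
  show ?thesis
  proof (cases oy)
    case None
    then show ?thesis using r1 r2 Some by (simp add: rel_def papp_def split: option.splits)
  next
    case (Some y)
    with \<open>ox = Some x\<close> r1 r2 have xy: "x \<in> C" "y \<in> C" "oi = Some (e x)" "oj = Some (e y)"
      by (auto simp: rel_def)
    have e1: "papp app ox oy = app x y" using Some \<open>ox = Some x\<close> by simp
    have e2: "papp (TR e C app) oi oj = map_option e (app x y)"
      using xy(3,4) TR_e[OF inj xy(1,2)] by simp
    have "\<forall>z. app x y = Some z \<longrightarrow> z \<in> C" using cl xy(1,2) by blast
    then show ?thesis unfolding rel_def e1 e2 by blast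
  qed
qed

lemma rel_eq: "inj_on e C \<Longrightarrow> rel e C ox oi \<Longrightarrow> rel e C oy oj \<Longrightarrow> ox = oy \<Longrightarrow> oi = oj"
  by (simp add: rel_def)

lemma rel_None: "rel e C ox oi \<Longrightarrow> ox \<noteq> None \<Longrightarrow> oi \<noteq> None"
  by (auto simp: rel_def)

lemma rel_Some_iff: "rel e C ox oi \<Longrightarrow> ox = Some a \<Longrightarrow> oi = Some (e a)"
  by (auto simp: rel_def)

lemma pca_tr:
  assumes inj: "inj_on e C" and p: "is_pca C app"
  shows "is_pca (e ` C) (TR e C app)"
proof -
  have cl: "\<forall>a\<in>C. \<forall>b\<in>C. \<forall>c. app a b = Some c \<longrightarrow> c \<in> C" using p unfolding is_pca_def by (rule conjunct1)
  from p obtain K S where KS: "K \<in> C" "S \<in> C"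
    "\<forall>a\<in>C. \<forall>b\<in>C. papp app (papp app (Some K) (Some a)) (Some b) = Some a"
    "\<forall>a\<in>C. \<forall>b\<in>C. papp app (papp app (Some S) (Some a)) (Some b) \<noteq> None"
    "\<forall>a\<in>C. \<forall>b\<in>C. \<forall>c\<in>C. papp app (papp app (papp app (Some S) (Some a)) (Some b)) (Some c) =
           papp app (papp app (Some a) (Some c)) (papp app (Some b) (Some c))"
    unfolding is_pca_def by blast
  note RP = rel_papp[OF inj cl]
  have c1: "\<forall>i\<in>e ` C. \<forall>j\<in>e ` C. \<forall>c. TR e C app i j = Some c \<longrightarrow> c \<in> e ` C"
  proof (intro ballI allI impI)
    fix i j c assume "i \<in> e ` C" "j \<in> e ` C" "TR e C app i j = Some c"
    then obtain a b where ab: "a \<in> C" "b \<in> C" "i = e a" "j = e b" by blast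
    have "map_option e (app a b) = Some c"
      using TR_e[OF inj ab(1,2), of app] \<open>TR e C app i j = Some c\<close> ab(3,4) by simp
    then obtain c0 where c0: "app a b = Some c0" "c = e c0" by blast
    then have "c0 \<in> C" using cl ab(1,2) by blast
    then show "c \<in> e ` C" using c0(2) by blast
  qed
  have c2: "\<forall>i\<in>e ` C. \<forall>j\<in>e ` C. papp (TR e C app) (papp (TR e C app) (Some (e K)) (Some i)) (Some j) = Some i"
  proof (intro ballI)
    fix i j assume "i \<in> e ` C" "j \<in> e ` C"
    then obtain a b where ab: "a \<in> C" "b \<in> C" "i = e a" "j = e b" by auto
    have R0: "rel e C (papp app (papp app (Some K) (Some a)) (Some b))
       (papp (TR e C app) (papp (TR e C app) (Some (e K)) (Some (e a))) (Some (e b)))"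
      by (intro RP rel_Some ab KS)
    show "papp (TR e C app) (papp (TR e C app) (Some (e K)) (Some i)) (Some j) = Some i"
      using rel_Some_iff[OF R0 KS(3)[rule_format, OF ab(1,2)]] ab(3,4) by simp
  qed
  have c3: "\<forall>i\<in>e ` C. \<forall>j\<in>e ` C. papp (TR e C app) (papp (TR e C app) (Some (e S)) (Some i)) (Some j) \<noteq> None"
  proof (intro ballI)
    fix i j assume "i \<in> e ` C" "j \<in> e ` C"
    then obtain a b where ab: "a \<in> C" "b \<in> C" "i = e a" "j = e b" by auto
    have R0: "rel e C (papp app (papp app (Some S) (Some a)) (Some b))
       (papp (TR e C app) (papp (TR e C app) (Some (e S)) (Some (e a))) (Some (e b)))"
      by (intro RP rel_Some ab KS)
    show "papp (TR e C app) (papp (TR e C app) (Some (e S)) (Some i)) (Some j) \<noteq> None"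
      using rel_None[OF R0 KS(4)[rule_format, OF ab(1,2)]] ab(3,4) by simp
  qed
  have c4: "\<forall>i\<in>e ` C. \<forall>j\<in>e ` C. \<forall>k\<in>e ` C.
     papp (TR e C app) (papp (TR e C app) (papp (TR e C app) (Some (e S)) (Some i)) (Some j)) (Some k) =
     papp (TR e C app) (papp (TR e C app) (Some i) (Some k)) (papp (TR e C app) (Some j) (Some k))"
  proof (intro ballI)
    fix i j k assume "i \<in> e ` C" "j \<in> e ` C" "k \<in> e ` C"
    then obtain a b c where ab: "a \<in> C" "b \<in> C" "c \<in> C" "i = e a" "j = e b" "k = e c" by auto
    have L: "rel e C (papp app (papp app (papp app (Some S) (Some a)) (Some b)) (Some c))
       (papp (TR e C app) (papp (TR e C app) (papp (TR e C app) (Some (e S)) (Some (e a))) (Some (e b))) (Some (e c)))"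
      by (intro RP rel_Some ab KS)
    have R: "rel e C (papp app (papp app (Some a) (Some c)) (papp app (Some b) (Some c)))
       (papp (TR e C app) (papp (TR e C app) (Some (e a)) (Some (e c))) (papp (TR e C app) (Some (e b)) (Some (e c))))"
      by (intro RP rel_Some ab KS)
    show "papp (TR e C app) (papp (TR e C app) (papp (TR e C app) (Some (e S)) (Some i)) (Some j)) (Some k) =
     papp (TR e C app) (papp (TR e C app) (Some i) (Some k)) (papp (TR e C app) (Some j) (Some k))"
      using rel_eq[OF inj L R KS(5)[rule_format, OF ab(1,2,3)]] ab(4,5,6) by simp
  qed
  show ?thesis unfolding is_pca_def
    using c1 c2 c3 c4 KS(1,2) by blast
qed

lemma total_tr: "inj_on e C \<Longrightarrow> is_total C app \<Longrightarrow> is_total (e ` C) (TR e C app)"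
  by (auto simp: is_total_def TR_e)

lemma nontotal_tr: "inj_on e C \<Longrightarrow> \<not> is_total C app \<Longrightarrow> \<not> is_total (e ` C) (TR e C app)"
  by (auto simp: is_total_def TR_e)

lemma mor_tr:
  assumes inj: "inj_on e C" and cl: "\<forall>a\<in>C. \<forall>b\<in>C. \<forall>c. app2 a b = Some c \<longrightarrow> c \<in> C"
    and m: "applicative_morphism C app1 C app2 (\<lambda>x. {x})"
  shows "applicative_morphism (e ` C) (TR e C app1) (e ` C) (TR e C app2) (\<lambda>x. {x})"
proof -
  from m obtain r where r: "r \<in> C" "\<forall>a\<in>C. \<forall>a'\<in>C. \<forall>c. app1 a a' = Some c \<longrightarrow>
        (\<forall>b\<in>{a}. \<forall>b'\<in>{a'}. \<exists>d. papp app2 (papp app2 (Some r) (Some b)) (Some b') = Some d \<and> d \<in> {c})"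
    unfolding applicative_morphism_def by blast
  note RP = rel_papp[OF inj cl]
  have "\<forall>i\<in>e ` C. \<forall>j\<in>e ` C. \<forall>c. TR e C app1 i j = Some c \<longrightarrow>
        (\<forall>b\<in>{i}. \<forall>b'\<in>{j}. \<exists>d. papp (TR e C app2) (papp (TR e C app2) (Some (e r)) (Some b)) (Some b') = Some d \<and> d \<in> {c})"
  proof (intro ballI allI impI)
    fix i j c b b' assume h: "i \<in> e ` C" "j \<in> e ` C" "TR e C app1 i j = Some c" "b \<in> {i}" "b' \<in> {j}"
    then obtain a a' where ab: "a \<in> C" "a' \<in> C" "i = e a" "j = e a'" by auto
    then obtain c0 where c0: "app1 a a' = Some c0" "c = e c0" using h(3) TR_e[OF inj] by fastforce
    have "\<exists>d. papp app2 (papp app2 (Some r) (Some a)) (Some a') = Some d \<and> d \<in> {c0}"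
      using r(2) ab(1,2) c0(1) by blast
    then have E: "papp app2 (papp app2 (Some r) (Some a)) (Some a') = Some c0" by blast
    have R0: "rel e C (papp app2 (papp app2 (Some r) (Some a)) (Some a'))
       (papp (TR e C app2) (papp (TR e C app2) (Some (e r)) (Some (e a))) (Some (e a')))"
      by (intro RP rel_Some ab r)
    from rel_Some_iff[OF R0 E]
    have "papp (TR e C app2) (papp (TR e C app2) (Some (e r)) (Some (e a))) (Some (e a')) = Some (e c0)" .
    then show "\<exists>d. papp (TR e C app2) (papp (TR e C app2) (Some (e r)) (Some b)) (Some b') = Some d \<and> d \<in> {c}"
      using h(4,5) ab(3,4) c0(2) by simp
  qed
  then show ?thesis unfolding applicative_morphism_def using r(1) by blast
qed

theorem mainTheorem7:
  shows "\<exists>(A :: nat set) appA (B :: nat set) appB.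
           is_pca A appA \<and> is_total A appA \<and>
           is_pca B appB \<and> \<not> is_total B appB \<and>
           pca_isomorphic A appA B appB"
proof -
  let ?e = "to_nat_on CC"
  have inj: "inj_on ?e CC" using countable_CC by (rule inj_on_to_nat_on)
  have clA: "\<forall>a\<in>CC. \<forall>b\<in>CC. \<forall>c. appA a b = Some c \<longrightarrow> c \<in> CC" by (rule A_closed)
  have clB: "\<forall>a\<in>CC. \<forall>b\<in>CC. \<forall>c. appB a b = Some c \<longrightarrow> c \<in> CC" by (rule B_closed)
  have "pca_isomorphic (?e ` CC) (TR ?e CC appA) (?e ` CC) (TR ?e CC appB)"
    unfolding pca_isomorphic_def
    using mor_tr[OF inj clB morAB] mor_tr[OF inj clA morBA] by (auto simp: comp_am_def)
  then show ?thesis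
    using pca_tr[OF inj pcaA] pca_tr[OF inj pcaB] total_tr[OF inj totalA] nontotal_tr[OF inj nontotalB]
    by (intro exI[of _ "?e ` CC"] exI[of _ "TR ?e CC appA"] exI[of _ "TR ?e CC appB"] conjI)
qed

end
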